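(* Let $\epsilon\neq 0$ be a constant. Let the functions $m^i_{\ e}$ ($3\le i\le e\le N$, with $m^i_{\ e}=0$ for $e<i$ and $m^i_{\ i}>0$) be smooth functions of the variables $(x^3-\epsilon u, x^4,\dots,x^N)$ only. Put $g_{ef}=\sum_i m^i_{\ e}m^i_{\ f}$ and write $m_{33}=m^3_{\ 3}$. Let the following be arbitrary smooth functions: - $H(u,x^3,\dots,x^N)$; - $F_2$ and $E_n$ ($n=4,\dots,N$), functions of $(x^3-\epsilon u,x^4,\dots,x^N)$; - $f(x^3,\dots,x^N)$. Let $\Phi(u,x^3,\dots,x^N)$ be any smooth function with $\partial_u\Phi = \partial_3 H$, and fix $u_0$. Define $$\hat W_3 = \Phi + \epsilon^{-1}\big(F_2+f\big),\qquad L_n = \partial_nH + \epsilon\,\partial_n\Phi+\partial_n f,$$ $$\hat W_n(u,x)=\int_{u_0}^{u} L_n(z,x^3-\epsilon u+\epsilon z,x^4,\dots,x^N)\,dz+E_n(x^3-\epsilon u,x^4,\dots,x^N).$$ Then the vector field $$X = n + F_2\,\ell+\epsilon\, m_{33}\, m_3$$ is a Killing vector field of the metric $g = 2\,du\,\big(dv + H\,du + \hat W_e\,dx^e\big) + g_{ef}\,dx^e dx^f$, with $$g(X,X) = 2F_2+\epsilon^2 m_{33}^{\,2}.$$ In particular, for any choice of $F_2\le -\tfrac12\epsilon^2m_{33}^{\,2}$ (possible because $F_2$ and $m_{33}$ depend on the same variables), $X$ is everywhere timelike or null.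
   Context: Work on an open set with coordinates $(u,v,x^3,\dots,x^N)$, $N\ge 3$. The indices $e,f$ run over $3,\dots,N$ and are summed, and the indices $n,m$ run over $4,\dots,N$. Derivatives are written $\partial_u=\partial/\partial u$ and $\partial_e=\partial/\partial x^e$. The frame vectors associated with the metric $g$ above are $$\ell=\partial_v,\qquad n=\partial_u - H\,\partial_v,\qquad m_i = m_i^{\ e}\big(\partial_e-\hat W_e\,\partial_v\big),$$ where $m_i^{\ e}$ is the inverse of the matrix $(m^i_{\ e})$, i.e. $\sum_e m^i_{\ e}m_j^{\ e}=\delta_{ij}$. Since $(m^i_{\ e})$ is upper triangular, $m_3 = m_{33}^{-1}\big(\partial_3 - \hat W_3\,\partial_v\big)$. For a vector field $X = X_1 n+X_2\ell+\sum_i X_im_i$ one has $g(X,X) = 2X_1X_2+\sum_i X_i^2$. *)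

theory Defs
  imports "HOL-Analysis.Analysis"
begin

text \<open>Points of coordinate space are functions nat => real.  Coordinate 1 is u,
coordinate 2 is v, coordinates 3..N are x^3..x^N.  For a finite index set I,
RN I is the copy of R^I inside nat => real (all other coordinates are 0).\<close>

definition RN :: "nat set \<Rightarrow> (nat \<Rightarrow> real) set" where
  "RN I = {p. \<forall>i. i \<notin> I \<longrightarrow> p i = 0}"

definition pd :: "nat \<Rightarrow> ((nat \<Rightarrow> real) \<Rightarrow> real) \<Rightarrow> (nat \<Rightarrow> real) \<Rightarrow> real" where
  "pd j F p = deriv (\<lambda>t. F (p(j := t))) (p j)"

fun iter_pd :: "nat list \<Rightarrow> ((nat \<Rightarrow> real) \<Rightarrow> real) \<Rightarrow> (nat \<Rightarrow> real) \<Rightarrow> real" where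
  "iter_pd [] F = F"
| "iter_pd (j # js) F = pd j (iter_pd js F)"

definition smooth_on_coords :: "nat set \<Rightarrow> ((nat \<Rightarrow> real) \<Rightarrow> real) \<Rightarrow> bool" where
  "smooth_on_coords I F \<longleftrightarrow>
     (\<forall>js. set js \<subseteq> I \<longrightarrow>
        continuous_on (RN I) (iter_pd js F) \<and>
        (\<forall>j\<in>I. \<forall>p\<in>RN I. (\<lambda>t. iter_pd js F (p(j := t))) differentiable (at (p j))))"

text \<open>Projections: (u,x^3..x^N), (x^3..x^N), and (x^3 - eps u, x^4..x^N)
(the latter stored in slots 3..N).\<close>
definition noV :: "nat \<Rightarrow> (nat \<Rightarrow> real) \<Rightarrow> nat \<Rightarrow> real" where
  "noV N p = (\<lambda>j. if j = 1 \<or> j \<in> {3..N} then p j else 0)"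

definition xs :: "nat \<Rightarrow> (nat \<Rightarrow> real) \<Rightarrow> nat \<Rightarrow> real" where
  "xs N p = (\<lambda>j. if j \<in> {3..N} then p j else 0)"

definition sh :: "nat \<Rightarrow> real \<Rightarrow> (nat \<Rightarrow> real) \<Rightarrow> nat \<Rightarrow> real" where
  "sh N \<epsilon> p = (\<lambda>j. if j = 3 then p 3 - \<epsilon> * p 1 else if j \<in> {4..N} then p j else 0)"

definition W3 :: "nat \<Rightarrow> real \<Rightarrow> ((nat \<Rightarrow> real) \<Rightarrow> real) \<Rightarrow> ((nat \<Rightarrow> real) \<Rightarrow> real)
    \<Rightarrow> ((nat \<Rightarrow> real) \<Rightarrow> real) \<Rightarrow> (nat \<Rightarrow> real) \<Rightarrow> real" where
  "W3 N \<epsilon> F2 f \<Phi> p = \<Phi> (noV N p) + (F2 (sh N \<epsilon> p) + f (xs N p)) / \<epsilon>"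

definition Ln :: "nat \<Rightarrow> real \<Rightarrow> ((nat \<Rightarrow> real) \<Rightarrow> real) \<Rightarrow> ((nat \<Rightarrow> real) \<Rightarrow> real)
    \<Rightarrow> ((nat \<Rightarrow> real) \<Rightarrow> real) \<Rightarrow> nat \<Rightarrow> (nat \<Rightarrow> real) \<Rightarrow> real" where
  "Ln N \<epsilon> H \<Phi> f n q = pd n H q + \<epsilon> * pd n \<Phi> q + pd n (\<lambda>r. f (xs N r)) q"

definition Wn :: "nat \<Rightarrow> real \<Rightarrow> ((nat \<Rightarrow> real) \<Rightarrow> real) \<Rightarrow> ((nat \<Rightarrow> real) \<Rightarrow> real)
    \<Rightarrow> ((nat \<Rightarrow> real) \<Rightarrow> real) \<Rightarrow> (nat \<Rightarrow> (nat \<Rightarrow> real) \<Rightarrow> real) \<Rightarrow> real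
    \<Rightarrow> nat \<Rightarrow> (nat \<Rightarrow> real) \<Rightarrow> real" where
  "Wn N \<epsilon> H \<Phi> f E u0 n p =
     (LBINT z=u0..p 1. Ln N \<epsilon> H \<Phi> f n
        (\<lambda>j. if j = 1 then z else if j = 3 then p 3 - \<epsilon> * p 1 + \<epsilon> * z
             else if j \<in> {4..N} then p j else 0))
     + E n (sh N \<epsilon> p)"

definition What :: "nat \<Rightarrow> real \<Rightarrow> ((nat \<Rightarrow> real) \<Rightarrow> real) \<Rightarrow> ((nat \<Rightarrow> real) \<Rightarrow> real)
    \<Rightarrow> ((nat \<Rightarrow> real) \<Rightarrow> real) \<Rightarrow> ((nat \<Rightarrow> real) \<Rightarrow> real) \<Rightarrow> (nat \<Rightarrow> (nat \<Rightarrow> real) \<Rightarrow> real)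
    \<Rightarrow> real \<Rightarrow> nat \<Rightarrow> (nat \<Rightarrow> real) \<Rightarrow> real" where
  "What N \<epsilon> H F2 f \<Phi> E u0 e p =
     (if e = 3 then W3 N \<epsilon> F2 f \<Phi> p else Wn N \<epsilon> H \<Phi> f E u0 e p)"

text \<open>Components g_ab of the metric
 g = 2 du (dv + H du + hatW_e dx^e) + g_ef dx^e dx^f,  g_ef = sum_i m^i_e m^i_f.
Index 1 = u, 2 = v, 3..N = x^e.\<close>
definition gmet :: "nat \<Rightarrow> real \<Rightarrow> (nat \<Rightarrow> nat \<Rightarrow> (nat \<Rightarrow> real) \<Rightarrow> real)
    \<Rightarrow> ((nat \<Rightarrow> real) \<Rightarrow> real) \<Rightarrow> ((nat \<Rightarrow> real) \<Rightarrow> real)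
    \<Rightarrow> ((nat \<Rightarrow> real) \<Rightarrow> real) \<Rightarrow> ((nat \<Rightarrow> real) \<Rightarrow> real) \<Rightarrow> (nat \<Rightarrow> (nat \<Rightarrow> real) \<Rightarrow> real)
    \<Rightarrow> real \<Rightarrow> nat \<Rightarrow> nat \<Rightarrow> (nat \<Rightarrow> real) \<Rightarrow> real" where
  "gmet N \<epsilon> m H F2 f \<Phi> E u0 a b p =
     (if a = 1 \<and> b = 1 then 2 * H (noV N p)
      else if (a = 1 \<and> b = 2) \<or> (a = 2 \<and> b = 1) then 1
      else if a = 1 \<and> b \<in> {3..N} then What N \<epsilon> H F2 f \<Phi> E u0 b p
      else if b = 1 \<and> a \<in> {3..N} then What N \<epsilon> H F2 f \<Phi> E u0 a p
      else if a \<in> {3..N} \<and> b \<in> {3..N} then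
        (\<Sum>i\<in>{3..N}. m i a (sh N \<epsilon> p) * m i b (sh N \<epsilon> p))
      else 0)"

definition ellv :: "(nat \<Rightarrow> real) \<Rightarrow> nat \<Rightarrow> real" where
  "ellv p = (\<lambda>a. if a = 2 then 1 else 0)"

definition nv :: "nat \<Rightarrow> ((nat \<Rightarrow> real) \<Rightarrow> real) \<Rightarrow> (nat \<Rightarrow> real) \<Rightarrow> nat \<Rightarrow> real" where
  "nv N H p = (\<lambda>a. if a = 1 then 1 else if a = 2 then - H (noV N p) else 0)"

definition m3v :: "nat \<Rightarrow> real \<Rightarrow> (nat \<Rightarrow> nat \<Rightarrow> (nat \<Rightarrow> real) \<Rightarrow> real)
    \<Rightarrow> ((nat \<Rightarrow> real) \<Rightarrow> real) \<Rightarrow> ((nat \<Rightarrow> real) \<Rightarrow> real) \<Rightarrow> ((nat \<Rightarrow> real) \<Rightarrow> real)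
    \<Rightarrow> (nat \<Rightarrow> real) \<Rightarrow> nat \<Rightarrow> real" where
  "m3v N \<epsilon> m F2 f \<Phi> p = (\<lambda>a. (1 / m 3 3 (sh N \<epsilon> p)) *
      (if a = 3 then 1 else if a = 2 then - W3 N \<epsilon> F2 f \<Phi> p else 0))"

definition Xv :: "nat \<Rightarrow> real \<Rightarrow> (nat \<Rightarrow> nat \<Rightarrow> (nat \<Rightarrow> real) \<Rightarrow> real)
    \<Rightarrow> ((nat \<Rightarrow> real) \<Rightarrow> real) \<Rightarrow> ((nat \<Rightarrow> real) \<Rightarrow> real) \<Rightarrow> ((nat \<Rightarrow> real) \<Rightarrow> real)
    \<Rightarrow> ((nat \<Rightarrow> real) \<Rightarrow> real) \<Rightarrow> (nat \<Rightarrow> real) \<Rightarrow> nat \<Rightarrow> real" where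
  "Xv N \<epsilon> m H F2 f \<Phi> p = (\<lambda>a. nv N H p a + F2 (sh N \<epsilon> p) * ellv p a
      + \<epsilon> * m 3 3 (sh N \<epsilon> p) * m3v N \<epsilon> m F2 f \<Phi> p a)"

definition killing :: "nat \<Rightarrow> (nat \<Rightarrow> nat \<Rightarrow> (nat \<Rightarrow> real) \<Rightarrow> real)
    \<Rightarrow> ((nat \<Rightarrow> real) \<Rightarrow> nat \<Rightarrow> real) \<Rightarrow> bool" where
  "killing N g X \<longleftrightarrow>
     (\<forall>p\<in>RN {1..N}. \<forall>a\<in>{1..N}. \<forall>b\<in>{1..N}.
        (\<Sum>c\<in>{1..N}. X p c * pd c (g a b) p
            + g c b p * pd a (\<lambda>q. X q c) p
            + g a c p * pd b (\<lambda>q. X q c) p) = 0)"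

definition gnorm :: "nat \<Rightarrow> (nat \<Rightarrow> nat \<Rightarrow> (nat \<Rightarrow> real) \<Rightarrow> real)
    \<Rightarrow> ((nat \<Rightarrow> real) \<Rightarrow> nat \<Rightarrow> real) \<Rightarrow> (nat \<Rightarrow> real) \<Rightarrow> real" where
  "gnorm N g X p = (\<Sum>a\<in>{1..N}. \<Sum>b\<in>{1..N}. g a b p * X p a * X p b)"

end

theory Submission
  imports Defs
begin


lemma LBINT_eq_integral:
  fixes g :: "real \<Rightarrow> real" and a b :: real
  assumes "continuous_on UNIV g"
  shows "(LBINT z=a..b. g z) = integral {a..b} g - integral {b..a} g"
proof (cases "a \<le> b")
  case True
  have "(LBINT z=a..b. g z) = integral {a..b} g"
    by (rule interval_integral_eq_integral[OF True borel_integrable_atLeastAtMost'])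
       (rule continuous_on_subset[OF assms], simp)
  moreover have "integral {b..a} g = 0" using True
    by (cases "a = b") auto
  ultimately show ?thesis by simp
next
  case False
  have "(LBINT z=b..a. g z) = integral {b..a} g"
    by (rule interval_integral_eq_integral[OF _ borel_integrable_atLeastAtMost'])
       (use False in simp, rule continuous_on_subset[OF assms], simp)
  moreover have "integral {a..b} g = 0" using False by simp
  ultimately show ?thesis by (simp add: interval_integral_endpoints_reverse[of a b])
qed

lemma FTC_at:
  fixes g :: "real \<Rightarrow> real" and c x :: real
  assumes "continuous_on UNIV g"
  shows "((\<lambda>y::real. LBINT z=c..y. g z) has_real_derivative g x) (at x)"
proof -
  define a where "a = min c x - 1"
  define b where "b = max c x + 1"
  have "((\<lambda>y::real. LBINT z=c..y. g z) has_vector_derivative g x) (at x within {a..b})"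
    by (rule interval_integral_FTC2) (auto simp: a_def b_def intro: continuous_on_subset[OF assms])
  then have "((\<lambda>y::real. LBINT z=c..y. g z) has_vector_derivative g x) (at x within {a<..<b})"
    by (rule has_vector_derivative_within_subset) auto
  then have "((\<lambda>y::real. LBINT z=c..y. g z) has_vector_derivative g x) (at x)"
    by (subst (asm) has_vector_derivative_within_open) (auto simp: a_def b_def)
  then show ?thesis by (simp add: has_real_derivative_iff_has_vector_derivative)
qed

lemma leib:
  fixes h hs :: "real \<Rightarrow> real \<Rightarrow> real" and a b s0 :: real
  assumes hc: "continuous_on UNIV (\<lambda>(z,s). h z s)"
  and hsd: "\<And>z s. ((\<lambda>s. h z s) has_real_derivative hs z s) (at s)"
  and hsc: "continuous_on UNIV (\<lambda>(z,s). hs z s)"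
  shows "((\<lambda>s. LBINT z=a..b. h z s) has_real_derivative (LBINT z=a..b. hs z s0)) (at s0)"
proof -
  have c1: "continuous_on UNIV (\<lambda>z. h z s)" for s
    by (rule continuous_on_compose2[OF hc, where f="\<lambda>z. (z,s)", simplified]) (auto intro!: continuous_intros)
  have c2: "continuous_on UNIV (\<lambda>z. hs z s)" for s
    by (rule continuous_on_compose2[OF hsc, where f="\<lambda>z. (z,s)", simplified]) (auto intro!: continuous_intros)
  have I: "((\<lambda>s. integral (cbox c d) (\<lambda>z. h z s)) has_real_derivative integral (cbox c d) (\<lambda>z. hs z s0)) (at s0)" for c d :: real
  proof -
    have "((\<lambda>s. integral (cbox c d) (\<lambda>z. h z s)) has_field_derivative integral (cbox c d) (\<lambda>z. hs z s0)) (at s0 within UNIV)"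
    proof (rule leibniz_rule_field_derivative)
      show "\<And>x t. x \<in> UNIV \<Longrightarrow> t \<in> cbox c d \<Longrightarrow> ((\<lambda>x. h t x) has_field_derivative hs t x) (at x within UNIV)"
        using hsd by simp
      show "\<And>x. x \<in> UNIV \<Longrightarrow> (\<lambda>z. h z x) integrable_on cbox c d"
        by (intro integrable_continuous continuous_on_subset[OF c1]) auto
      show "continuous_on (UNIV \<times> cbox c d) (\<lambda>(x, t). hs t x)"
      proof -
        have "continuous_on UNIV ((\<lambda>(z,s). hs z s) \<circ> (\<lambda>(x,t). (t,x)))"
          by (intro continuous_on_compose continuous_on_subset[OF hsc]) (auto intro!: continuous_intros simp: split_beta)
        moreover have "(\<lambda>(z,s). hs z s) \<circ> (\<lambda>(x,t). (t,x)) = (\<lambda>(x,t). hs t x)" by (auto simp: fun_eq_iff)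
        ultimately show ?thesis using continuous_on_subset by fastforce
      qed
    qed auto
    then show ?thesis by simp
  qed
  have e: "(\<lambda>s. LBINT z=a..b. h z s) = (\<lambda>s. integral (cbox a b) (\<lambda>z. h z s) - integral (cbox b a) (\<lambda>z. h z s))"
    by (auto simp: LBINT_eq_integral[OF c1])
  show ?thesis unfolding e LBINT_eq_integral[OF c2]
    using DERIV_diff[OF I I] by simp
qed

lemma B_line:
  fixes h hs :: "real \<Rightarrow> real \<Rightarrow> real" and u0 c e t0 :: real
  assumes hc: "continuous_on UNIV (\<lambda>(z,s). h z s)"
  and hsd: "\<And>z s. ((\<lambda>s. h z s) has_real_derivative hs z s) (at s)"
  and hsc: "continuous_on UNIV (\<lambda>(z,s). hs z s)"
  shows "((\<lambda>t::real. LBINT z=u0..t. h z (c - e*t)) has_real_derivative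
     (h t0 (c - e*t0) - e * (LBINT z=u0..t0. hs z (c - e*t0)))) (at t0)"
proof -
  define s0 where "s0 = c - e*t0"
  define Bs where "Bs = (LBINT z=u0..t0. hs z s0)"
  have c1: "continuous_on UNIV (\<lambda>z. h z s)" for s
    by (rule continuous_on_compose2[OF hc, where f="\<lambda>z. (z,s)", simplified]) (auto intro!: continuous_intros)
  have hcont: "continuous (at (s0, t0) within UNIV \<times> UNIV) (\<lambda>(x, y). blinfun_mult_right (h y x))"
  proof -
    have "continuous_on UNIV ((\<lambda>(z,s). h z s) \<circ> (\<lambda>(x,t). (t,x)))"
      by (intro continuous_on_compose continuous_on_subset[OF hc]) (auto intro!: continuous_intros simp: split_beta)
    moreover have "(\<lambda>(z,s). h z s) \<circ> (\<lambda>(x,t). (t,x)) = (\<lambda>(x,t). h t x)" by (auto simp: fun_eq_iff)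
    ultimately have "continuous_on UNIV (\<lambda>(x,t). h t x)" by simp
    then have "continuous (at (s0,t0)) (\<lambda>(x,t). h t x)"
      by (simp add: continuous_on_eq_continuous_at)
    then have "continuous (at (s0,t0)) (\<lambda>p. blinfun_mult_right ((\<lambda>(x,t). h t x) p))"
      by (intro continuous_intros)
    moreover have "(\<lambda>p. blinfun_mult_right ((\<lambda>(x,t). h t x) p)) = (\<lambda>(x, y). blinfun_mult_right (h y x))"
      by (auto simp: fun_eq_iff)
    ultimately show ?thesis by simp
  qed
  have D2: "((\<lambda>(s, y::real). LBINT z=u0..y. h z s) has_derivative (\<lambda>(tx, ty). Bs * tx + blinfun_mult_right (h t0 s0) ty)) (at (s0, t0) within UNIV \<times> UNIV)"
  proof (rule has_derivative_partialsI[where f="\<lambda>s y::real. LBINT z=u0..y. h z s"])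
    show "((\<lambda>x. LBINT z=u0..t0. h z x) has_derivative (*) Bs) (at s0 within UNIV)"
      using leib[OF hc hsd hsc, of u0 t0 s0] unfolding Bs_def has_field_derivative_def by simp
    show "\<And>x y. x \<in> UNIV \<Longrightarrow> y \<in> UNIV \<Longrightarrow>
           ((\<lambda>y::real. LBINT z=u0..y. h z x) has_derivative blinfun_apply (blinfun_mult_right (h y x))) (at y within UNIV)"
      using FTC_at[OF c1] unfolding has_field_derivative_def by simp
    show "continuous (at (s0, t0) within UNIV \<times> UNIV) (\<lambda>(x, y). blinfun_mult_right (h y x))" by (rule hcont)
  qed auto
  have Dg: "((\<lambda>t. (c - e*t, t)) has_derivative (\<lambda>dt. (-e*dt, dt))) (at t0)"
    by (auto intro!: derivative_eq_intros)
  have D2': "((\<lambda>(s, y::real). LBINT z=u0..y. h z s) has_derivative (\<lambda>(tx, ty). Bs * tx + h t0 s0 * ty)) (at ((\<lambda>t. (c - e*t, t)) t0))"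
    using D2 by (simp add: s0_def)
  from diff_chain_at[OF Dg D2']
  have "((\<lambda>t::real. LBINT z=u0..t. h z (c - e*t)) has_derivative (\<lambda>dt. Bs * (-e*dt) + h t0 s0 * dt)) (at t0)"
    by (simp add: o_def)
  then show ?thesis unfolding has_field_derivative_def s0_def[symmetric] Bs_def[symmetric]
    by (rule has_derivative_eq_rhs) (auto simp: fun_eq_iff algebra_simps)
qed

lemma pd_eqI: "((\<lambda>t. F (p(j:=t))) has_real_derivative D) (at (p j)) \<Longrightarrow> pd j F p = D"
  by (simp add: pd_def DERIV_imp_deriv)

lemma pd_const: "(\<And>t. F (p(j:=t)) = c) \<Longrightarrow> pd j F p = 0"
  by (rule pd_eqI) simp

lemma pd_cong: "(\<And>t. F (p(j:=t)) = G (p(j:=t))) \<Longrightarrow> pd j F p = pd j G p"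
  by (simp add: pd_def)

lemma smooth_D:
  assumes "smooth_on_coords I F" "set js \<subseteq> I" "j \<in> I" "q \<in> RN I"
  shows "((\<lambda>t. iter_pd js F (q(j:=t))) has_real_derivative iter_pd (j#js) F q) (at (q j))"
proof -
  have "(\<lambda>t. iter_pd js F (q(j:=t))) differentiable (at (q j))"
    using assms unfolding smooth_on_coords_def by blast
  then show ?thesis by (simp add: DERIV_deriv_iff_real_differentiable[symmetric] pd_def)
qed

lemma smooth_C:
  assumes "smooth_on_coords I F" "set js \<subseteq> I"
  shows "continuous_on (RN I) (iter_pd js F)"
  using assms unfolding smooth_on_coords_def by blast

lemma affine_line:
  assumes "((\<lambda>y. F (q(j:=y))) has_real_derivative D) (at (q j))" "a*t0 + b = q j"
  shows "((\<lambda>t. F (q(j := a*t+b))) has_real_derivative a*D) (at t0)"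
proof -
  have d: "((\<lambda>t. a*t+b) has_real_derivative a) (at t0)" by (auto intro!: derivative_eq_intros)
  have "((\<lambda>y. F (q(j:=y))) has_real_derivative D) (at (a*t0+b))" using assms by simp
  from DERIV_chain2[OF this d] show ?thesis by (simp add: mult.commute)
qed

lemma noV_RN: "noV N q \<in> RN ({1} \<union> {3..N})" by (auto simp: noV_def RN_def)
lemma xs_RN: "xs N q \<in> RN {3..N}" by (auto simp: xs_def RN_def)
lemma sh_RN: "N \<ge> 3 \<Longrightarrow> sh N \<epsilon> q \<in> RN {3..N}" by (auto simp: sh_def RN_def)

lemma noV_1: "noV N (q(1:=t)) = (noV N q)(1:=t)" by (auto simp: noV_def fun_eq_iff)
lemma noV_j: "j \<in> {3..N} \<Longrightarrow> noV N (q(j:=t)) = (noV N q)(j:=t)" by (auto simp: noV_def fun_eq_iff)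
lemma noV_2: "noV N (q(2:=t)) = noV N q" by (auto simp: noV_def fun_eq_iff)
lemma xs_1: "xs N (q(1:=t)) = xs N q" by (auto simp: xs_def fun_eq_iff)
lemma xs_2: "xs N (q(2:=t)) = xs N q" by (auto simp: xs_def fun_eq_iff)
lemma xs_j: "j \<in> {3..N} \<Longrightarrow> xs N (q(j:=t)) = (xs N q)(j:=t)" by (auto simp: xs_def fun_eq_iff)
lemma sh_1: "sh N \<epsilon> (q(1:=t)) = (sh N \<epsilon> q)(3 := (-\<epsilon>)*t + q 3)" by (auto simp: sh_def fun_eq_iff)
lemma sh_3: "N \<ge> 3 \<Longrightarrow> sh N \<epsilon> (q(3:=t)) = (sh N \<epsilon> q)(3 := 1*t + (-\<epsilon> * q 1))" by (auto simp: sh_def fun_eq_iff)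
lemma sh_2: "sh N \<epsilon> (q(2:=t)) = sh N \<epsilon> q" by (auto simp: sh_def fun_eq_iff)
lemma noV_at: "noV N q 1 = q 1" "j \<in> {3..N} \<Longrightarrow> noV N q j = q j" by (auto simp: noV_def)
lemma xs_at: "j \<in> {3..N} \<Longrightarrow> xs N q j = q j" by (auto simp: xs_def)
lemma sh_at: "N \<ge> 3 \<Longrightarrow> sh N \<epsilon> q 3 = q 3 - \<epsilon> * q 1" by (auto simp: sh_def)

lemma pd_xs: "n \<in> {3..N} \<Longrightarrow> pd n (\<lambda>r. f (xs N r)) q = pd n f (xs N q)"
proof -
  assume n: "n \<in> {3..N}"
  have "(\<lambda>t. f (xs N (q(n:=t)))) = (\<lambda>t. f ((xs N q)(n:=t)))"
    using n by (simp add: xs_j)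
  moreover have "xs N q n = q n" using n by (simp add: xs_def)
  ultimately show ?thesis by (simp add: pd_def)
qed


lemmas L1s = noV_1 noV_1[unfolded One_nat_def] xs_1 xs_1[unfolded One_nat_def] sh_1 sh_1[unfolded One_nat_def]
  noV_at noV_at(1)[unfolded One_nat_def] sh_at sh_at[unfolded One_nat_def]

lemma pd_sh:
  assumes N3: "N \<ge> 3" and d: "((\<lambda>y. F ((sh N \<epsilon> p)(3:=y))) has_real_derivative D) (at (sh N \<epsilon> p 3))"
  shows "pd 1 (\<lambda>q. F (sh N \<epsilon> q)) p + \<epsilon> * pd 3 (\<lambda>q. F (sh N \<epsilon> q)) p = 0"
proof -
  have "pd 1 (\<lambda>q. F (sh N \<epsilon> q)) p = (-\<epsilon>) * D"
    apply (rule pd_eqI) unfolding sh_1 by (rule affine_line[OF d]) (simp add: sh_at N3)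
  moreover have "pd 3 (\<lambda>q. F (sh N \<epsilon> q)) p = 1 * D"
    apply (rule pd_eqI) unfolding sh_3[OF N3] by (rule affine_line[OF d]) (simp add: sh_at N3)
  ultimately show ?thesis by simp
qed



lemma What_lines:
  fixes N :: nat and \<epsilon> u0 :: real
    and m :: "nat \<Rightarrow> nat \<Rightarrow> (nat \<Rightarrow> real) \<Rightarrow> real"
    and H F2 f \<Phi> :: "(nat \<Rightarrow> real) \<Rightarrow> real"
    and E :: "nat \<Rightarrow> (nat \<Rightarrow> real) \<Rightarrow> real"
  assumes N3: "N \<ge> 3"
    and eps: "\<epsilon> \<noteq> 0"
    and H_smooth: "smooth_on_coords ({1} \<union> {3..N}) H"
    and F2_smooth: "smooth_on_coords {3..N} F2"
    and E_smooth: "\<And>n. n \<in> {4..N} \<Longrightarrow> smooth_on_coords {3..N} (E n)"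
    and f_smooth: "smooth_on_coords {3..N} f"
    and Phi_smooth: "smooth_on_coords ({1} \<union> {3..N}) \<Phi>"
    and Phi_du: "\<And>q. q \<in> RN ({1} \<union> {3..N}) \<Longrightarrow> pd 1 \<Phi> q = pd 3 H q"
    and e: "e \<in> {3..N}"
  shows "pd 1 (What N \<epsilon> H F2 f \<Phi> E u0 e) p + \<epsilon> * pd 3 (What N \<epsilon> H F2 f \<Phi> E u0 e) p
     = pd e H (noV N p) + \<epsilon> * pd e \<Phi> (noV N p) + pd e f (xs N p)"
proof (cases "e = 3")
  case True
  have s3: "3 \<in> {3..N}" "3 \<in> {1} \<union> {3..N}" "1 \<in> {1} \<union> {3..N}" using N3 by auto
  have e1: "(\<lambda>t. What N \<epsilon> H F2 f \<Phi> E u0 3 (p(1:=t))) = (\<lambda>t. \<Phi> ((noV N p)(1:=t)) + (F2 ((sh N \<epsilon> p)(3 := (-\<epsilon>)*t + p 3)) + f (xs N p))/\<epsilon>)"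
    by (simp add: What_def W3_def L1s)
  have e3: "(\<lambda>t. What N \<epsilon> H F2 f \<Phi> E u0 3 (p(3:=t))) = (\<lambda>t. \<Phi> ((noV N p)(3:=t)) + (F2 ((sh N \<epsilon> p)(3 := 1*t + (-\<epsilon> * p 1))) + f ((xs N p)(3:=t)))/\<epsilon>)"
    using s3 N3 by (simp add: What_def W3_def noV_j sh_3 xs_j)
  have dP1: "((\<lambda>t. \<Phi> ((noV N p)(1:=t))) has_real_derivative pd 1 \<Phi> (noV N p)) (at (p 1))"
    using smooth_D[OF Phi_smooth, of "[]" 1 "noV N p"] s3 noV_RN by (simp add: L1s)
  have dP3: "((\<lambda>t. \<Phi> ((noV N p)(3:=t))) has_real_derivative pd 3 \<Phi> (noV N p)) (at (p 3))"
    using smooth_D[OF Phi_smooth, of "[]" 3 "noV N p"] s3 noV_RN by (simp add: L1s)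
  have dF: "((\<lambda>t. F2 ((sh N \<epsilon> p)(3:=t))) has_real_derivative pd 3 F2 (sh N \<epsilon> p)) (at (sh N \<epsilon> p 3))"
    using smooth_D[OF F2_smooth, of "[]" 3 "sh N \<epsilon> p"] s3 sh_RN N3 by simp
  have dF1: "((\<lambda>t. F2 ((sh N \<epsilon> p)(3 := (-\<epsilon>)*t + p 3))) has_real_derivative (-\<epsilon>) * pd 3 F2 (sh N \<epsilon> p)) (at (p 1))"
    by (rule affine_line[OF dF]) (simp add: L1s N3)
  have dF3: "((\<lambda>t. F2 ((sh N \<epsilon> p)(3 := 1*t + (-\<epsilon> * p 1)))) has_real_derivative 1 * pd 3 F2 (sh N \<epsilon> p)) (at (p 3))"
    by (rule affine_line[OF dF]) (simp add: L1s N3)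
  have df3: "((\<lambda>t. f ((xs N p)(3:=t))) has_real_derivative pd 3 f (xs N p)) (at (p 3))"
    using smooth_D[OF f_smooth, of "[]" 3 "xs N p"] s3 xs_RN by (simp add: xs_at)
  have D1: "pd 1 (What N \<epsilon> H F2 f \<Phi> E u0 3) p = pd 1 \<Phi> (noV N p) + ((-\<epsilon>) * pd 3 F2 (sh N \<epsilon> p) + 0) / \<epsilon>"
    apply (rule pd_eqI) unfolding e1
    by (intro DERIV_add DERIV_cdivide dP1 dF1 DERIV_const)
  have D3: "pd 3 (What N \<epsilon> H F2 f \<Phi> E u0 3) p = pd 3 \<Phi> (noV N p) + (1 * pd 3 F2 (sh N \<epsilon> p) + pd 3 f (xs N p)) / \<epsilon>"
    apply (rule pd_eqI) unfolding e3
    by (intro DERIV_add DERIV_cdivide dP3 dF3 df3)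
  have "pd 1 \<Phi> (noV N p) = pd 3 H (noV N p)" using Phi_du noV_RN by blast
  then show ?thesis unfolding True D1 D3 using eps by (simp add: field_simps)
next
  case False
  then have n: "e \<in> {4..N}" using e by auto
  have s3: "3 \<in> {3..N}" "3 \<in> {1} \<union> {3..N}" "1 \<in> {1} \<union> {3..N}" "e \<in> {3..N}" "e \<noteq> 1" "e \<noteq> 3" using N3 n by auto
  define Pt where "Pt = (\<lambda>z s. (\<lambda>j. if j = 1 then z else if j = 3 then s + \<epsilon>*z else if j \<in> {4..N} then p j else 0) :: nat \<Rightarrow> real)"
  define Qt where "Qt = (\<lambda>z s. (\<lambda>j. if j = 3 then s + \<epsilon>*z else if j \<in> {4..N} then p j else 0) :: nat \<Rightarrow> real)"
  define hh where "hh = (\<lambda>z s. Ln N \<epsilon> H \<Phi> f e (Pt z s))"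
  define hs where "hs = (\<lambda>z s. iter_pd [3,e] H (Pt z s) + \<epsilon> * iter_pd [3,e] \<Phi> (Pt z s) + iter_pd [3,e] f (Qt z s))"
  have PtRN: "Pt z s \<in> RN ({1} \<union> {3..N})" for z s using N3 by (auto simp: Pt_def RN_def)
  have QtRN: "Qt z s \<in> RN {3..N}" for z s using N3 by (auto simp: Qt_def RN_def)
  have xsPt: "xs N (Pt z s) = Qt z s" for z s using N3 by (auto simp: Pt_def Qt_def xs_def fun_eq_iff)
  have hh_eq: "hh z s = pd e H (Pt z s) + \<epsilon> * pd e \<Phi> (Pt z s) + pd e f (Qt z s)" for z s
    unfolding hh_def Ln_def using pd_xs[OF s3(4)] xsPt by simp
  have Pt3: "Pt z = (\<lambda>\<sigma>. (Pt z s)(3 := 1*\<sigma> + \<epsilon>*z))" for z s by (auto simp: Pt_def fun_eq_iff)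
  have Qt3: "Qt z = (\<lambda>\<sigma>. (Qt z s)(3 := 1*\<sigma> + \<epsilon>*z))" for z s by (auto simp: Qt_def fun_eq_iff)
  have contPt: "continuous_on UNIV (\<lambda>x. Pt (fst x) (snd x))"
    unfolding Pt_def
    apply (intro continuous_on_coordinatewise_then_product)
    subgoal for i by (cases "i = 1"; cases "i = 3"; cases "i \<in> {4..N}") (auto intro!: continuous_intros)
    done
  have contQt: "continuous_on UNIV (\<lambda>x. Qt (fst x) (snd x))"
    unfolding Qt_def
    apply (intro continuous_on_coordinatewise_then_product)
    subgoal for i by (cases "i = 1"; cases "i = 3"; cases "i \<in> {4..N}") (auto intro!: continuous_intros)
    done
  have cP: "continuous_on UNIV (\<lambda>x. iter_pd js F (Pt (fst x) (snd x)))"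
    if "smooth_on_coords ({1} \<union> {3..N}) F" "set js \<subseteq> {1} \<union> {3..N}" for F js
    by (rule continuous_on_compose2[OF smooth_C[OF that] contPt]) (use PtRN in auto)
  have cQ: "continuous_on UNIV (\<lambda>x. iter_pd js F (Qt (fst x) (snd x)))"
    if "smooth_on_coords {3..N} F" "set js \<subseteq> {3..N}" for F js
    by (rule continuous_on_compose2[OF smooth_C[OF that] contQt]) (use QtRN in auto)
  have hc: "continuous_on UNIV (\<lambda>(z,s). hh z s)"
  proof -
    have "continuous_on UNIV (\<lambda>x. iter_pd [e] H (Pt (fst x) (snd x)) + \<epsilon> * iter_pd [e] \<Phi> (Pt (fst x) (snd x)) + iter_pd [e] f (Qt (fst x) (snd x)))"
      using s3 by (intro continuous_intros cP cQ H_smooth Phi_smooth f_smooth) auto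
    then show ?thesis by (simp add: hh_eq split_beta)
  qed
  have hsc: "continuous_on UNIV (\<lambda>(z,s). hs z s)"
  proof -
    have "continuous_on UNIV (\<lambda>x. iter_pd [3,e] H (Pt (fst x) (snd x)) + \<epsilon> * iter_pd [3,e] \<Phi> (Pt (fst x) (snd x)) + iter_pd [3,e] f (Qt (fst x) (snd x)))"
      using s3 by (intro continuous_intros cP cQ H_smooth Phi_smooth f_smooth) auto
    then show ?thesis by (simp add: hs_def split_beta)
  qed
  have hsd: "((\<lambda>s. hh z s) has_real_derivative hs z s) (at s)" for z s
  proof -
    have a: "Pt z s 3 = 1 * s + \<epsilon>*z" "Qt z s 3 = 1 * s + \<epsilon>*z" by (auto simp: Pt_def Qt_def)
    have dH0: "((\<lambda>t. iter_pd [e] H ((Pt z s)(3:=t))) has_real_derivative iter_pd [3,e] H (Pt z s)) (at (Pt z s 3))"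
      by (rule smooth_D[OF H_smooth]) (use s3 PtRN in auto)
    have dH: "((\<lambda>\<sigma>. iter_pd [e] H ((Pt z s)(3 := 1*\<sigma> + \<epsilon>*z))) has_real_derivative 1 * iter_pd [3,e] H (Pt z s)) (at s)"
      by (rule affine_line[OF dH0]) (simp add: a)
    have dP0: "((\<lambda>t. iter_pd [e] \<Phi> ((Pt z s)(3:=t))) has_real_derivative iter_pd [3,e] \<Phi> (Pt z s)) (at (Pt z s 3))"
      by (rule smooth_D[OF Phi_smooth]) (use s3 PtRN in auto)
    have dP: "((\<lambda>\<sigma>. iter_pd [e] \<Phi> ((Pt z s)(3 := 1*\<sigma> + \<epsilon>*z))) has_real_derivative 1 * iter_pd [3,e] \<Phi> (Pt z s)) (at s)"
      by (rule affine_line[OF dP0]) (simp add: a)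
    have df0: "((\<lambda>t. iter_pd [e] f ((Qt z s)(3:=t))) has_real_derivative iter_pd [3,e] f (Qt z s)) (at (Qt z s 3))"
      by (rule smooth_D[OF f_smooth]) (use s3 QtRN in auto)
    have df: "((\<lambda>\<sigma>. iter_pd [e] f ((Qt z s)(3 := 1*\<sigma> + \<epsilon>*z))) has_real_derivative 1 * iter_pd [3,e] f (Qt z s)) (at s)"
      by (rule affine_line[OF df0]) (simp add: a)
    have "(\<lambda>s. hh z s) = (\<lambda>\<sigma>. iter_pd [e] H ((Pt z s)(3 := 1*\<sigma> + \<epsilon>*z)) + \<epsilon> * iter_pd [e] \<Phi> ((Pt z s)(3 := 1*\<sigma> + \<epsilon>*z)) + iter_pd [e] f ((Qt z s)(3 := 1*\<sigma> + \<epsilon>*z)))"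
    proof
      fix \<sigma>
      have "(Pt z s)(3 := 1*\<sigma> + \<epsilon>*z) = Pt z \<sigma>" "(Qt z s)(3 := 1*\<sigma> + \<epsilon>*z) = Qt z \<sigma>"
        by (auto simp: Pt_def Qt_def fun_eq_iff)
      then show "hh z \<sigma> = iter_pd [e] H ((Pt z s)(3 := 1*\<sigma> + \<epsilon>*z)) + \<epsilon> * iter_pd [e] \<Phi> ((Pt z s)(3 := 1*\<sigma> + \<epsilon>*z)) + iter_pd [e] f ((Qt z s)(3 := 1*\<sigma> + \<epsilon>*z))"
        by (simp only: hh_eq iter_pd.simps)
    qed
    then show ?thesis unfolding hs_def using DERIV_add[OF DERIV_add[OF dH DERIV_cmult[OF dP, of \<epsilon>]] df] by simp
  qed
  define s0 where "s0 = p 3 - \<epsilon> * p 1"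
  define Bs where "Bs = (LBINT z=u0..p 1. hs z s0)"
  have l1: "(\<lambda>t. What N \<epsilon> H F2 f \<Phi> E u0 e (p(1:=t))) = (\<lambda>t. (LBINT z=u0..t. hh z (p 3 - \<epsilon>*t)) + E e ((sh N \<epsilon> p)(3 := (-\<epsilon>)*t + p 3)))"
    using s3 by (simp add: What_def Wn_def L1s hh_def Pt_def cong: if_cong)
  have l3: "(\<lambda>t. What N \<epsilon> H F2 f \<Phi> E u0 e (p(3:=t))) = (\<lambda>t. (LBINT z=u0..p 1. hh z (t - \<epsilon>*p 1)) + E e ((sh N \<epsilon> p)(3 := 1*t + (-\<epsilon> * p 1))))"
    using s3 N3 by (simp add: What_def Wn_def sh_3 hh_def Pt_def cong: if_cong)
  have dE: "((\<lambda>t. E e ((sh N \<epsilon> p)(3:=t))) has_real_derivative pd 3 (E e) (sh N \<epsilon> p)) (at (sh N \<epsilon> p 3))"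
    using smooth_D[OF E_smooth[OF n], of "[]" 3 "sh N \<epsilon> p"] s3 sh_RN N3 by simp
  have dE1: "((\<lambda>t. E e ((sh N \<epsilon> p)(3 := (-\<epsilon>)*t + p 3))) has_real_derivative (-\<epsilon>) * pd 3 (E e) (sh N \<epsilon> p)) (at (p 1))"
    by (rule affine_line[OF dE]) (simp add: L1s N3)
  have dE3: "((\<lambda>t. E e ((sh N \<epsilon> p)(3 := 1*t + (-\<epsilon> * p 1)))) has_real_derivative 1 * pd 3 (E e) (sh N \<epsilon> p)) (at (p 3))"
    by (rule affine_line[OF dE]) (simp add: L1s N3)
  have dB1: "((\<lambda>t::real. LBINT z=u0..t. hh z (p 3 - \<epsilon>*t)) has_real_derivative (hh (p 1) s0 - \<epsilon> * Bs)) (at (p 1))"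
    unfolding s0_def Bs_def by (rule B_line[OF hc hsd hsc])
  have dB3: "((\<lambda>t. LBINT z=u0..p 1. hh z (t - \<epsilon>*p 1)) has_real_derivative Bs * 1) (at (p 3))"
  proof -
    have d: "((\<lambda>t. t - \<epsilon> * p 1) has_real_derivative 1) (at (p 3))" by (auto intro!: derivative_eq_intros)
    have "((\<lambda>s. LBINT z=u0..p 1. hh z s) has_real_derivative Bs) (at (p 3 - \<epsilon>*p 1))"
      unfolding Bs_def s0_def by (rule leib[OF hc hsd hsc])
    from DERIV_chain2[where f="\<lambda>s. LBINT z=u0..p 1. hh z s" and g="\<lambda>t. t - \<epsilon>*p 1", OF this d] show ?thesis
      by simp
  qed
  have D1: "pd 1 (What N \<epsilon> H F2 f \<Phi> E u0 e) p = (hh (p 1) s0 - \<epsilon> * Bs) + (-\<epsilon>) * pd 3 (E e) (sh N \<epsilon> p)"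
    apply (rule pd_eqI) unfolding l1 by (intro DERIV_add dB1 dE1)
  have D3: "pd 3 (What N \<epsilon> H F2 f \<Phi> E u0 e) p = Bs * 1 + 1 * pd 3 (E e) (sh N \<epsilon> p)"
    apply (rule pd_eqI) unfolding l3 by (intro DERIV_add dB3 dE3)
  have Pn: "Pt (p 1) s0 = noV N p" using N3 by (auto simp: Pt_def s0_def noV_def fun_eq_iff)
  have xn: "xs N (noV N p) = xs N p" by (auto simp: xs_def noV_def fun_eq_iff)
  have "hh (p 1) s0 = pd e H (noV N p) + \<epsilon> * pd e \<Phi> (noV N p) + pd e f (xs N p)"
    unfolding hh_def Pn Ln_def pd_xs[OF s3(4)] xn ..
  then show ?thesis unfolding D1 D3 by (simp add: algebra_simps)
qed



theorem mainTheorem5: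
  fixes N :: nat and \<epsilon> u0 :: real
    and m :: "nat \<Rightarrow> nat \<Rightarrow> (nat \<Rightarrow> real) \<Rightarrow> real"
    and H F2 f \<Phi> :: "(nat \<Rightarrow> real) \<Rightarrow> real"
    and E :: "nat \<Rightarrow> (nat \<Rightarrow> real) \<Rightarrow> real"
  assumes N3: "N \<ge> 3"
    and eps: "\<epsilon> \<noteq> 0"
    and m_smooth: "\<And>i e. i \<in> {3..N} \<Longrightarrow> e \<in> {3..N} \<Longrightarrow> smooth_on_coords {3..N} (m i e)"
    and m_tri: "\<And>i e y. i \<in> {3..N} \<Longrightarrow> e \<in> {3..N} \<Longrightarrow> e < i \<Longrightarrow> m i e y = 0"
    and m_diag: "\<And>i y. i \<in> {3..N} \<Longrightarrow> y \<in> RN {3..N} \<Longrightarrow> m i i y > 0"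
    and H_smooth: "smooth_on_coords ({1} \<union> {3..N}) H"
    and F2_smooth: "smooth_on_coords {3..N} F2"
    and E_smooth: "\<And>n. n \<in> {4..N} \<Longrightarrow> smooth_on_coords {3..N} (E n)"
    and f_smooth: "smooth_on_coords {3..N} f"
    and Phi_smooth: "smooth_on_coords ({1} \<union> {3..N}) \<Phi>"
    and Phi_du: "\<And>q. q \<in> RN ({1} \<union> {3..N}) \<Longrightarrow> pd 1 \<Phi> q = pd 3 H q"
  shows "killing N (gmet N \<epsilon> m H F2 f \<Phi> E u0) (Xv N \<epsilon> m H F2 f \<Phi>)
    \<and> (\<forall>p\<in>RN {1..N}. gnorm N (gmet N \<epsilon> m H F2 f \<Phi> E u0) (Xv N \<epsilon> m H F2 f \<Phi>) p
          = 2 * F2 (sh N \<epsilon> p) + \<epsilon>\<^sup>2 * (m 3 3 (sh N \<epsilon> p))\<^sup>2)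
    \<and> ((\<forall>y\<in>RN {3..N}. F2 y \<le> - (1/2) * \<epsilon>\<^sup>2 * (m 3 3 y)\<^sup>2) \<longrightarrow>
        (\<forall>p\<in>RN {1..N}. gnorm N (gmet N \<epsilon> m H F2 f \<Phi> E u0) (Xv N \<epsilon> m H F2 f \<Phi>) p \<le> 0))"
proof -
  have N3': "1 \<in> {1..N}" "2 \<in> {1..N}" "3 \<in> {1..N}" "3 \<in> {3..N}" "1 \<in> {1} \<union> {3..N}" "3 \<in> {1} \<union> {3..N}" using N3 by auto
  define K where "K = (\<lambda>q. H (noV N q) + \<epsilon> * \<Phi> (noV N q) + f (xs N q))"
  define g where "g = gmet N \<epsilon> m H F2 f \<Phi> E u0"
  define X where "X = Xv N \<epsilon> m H F2 f \<Phi>"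
  define dK where "dK = (\<lambda>a p. if a = 1 then pd 1 H (noV N p) + \<epsilon> * pd 1 \<Phi> (noV N p) else if a = 2 then 0
       else pd a H (noV N p) + \<epsilon> * pd a \<Phi> (noV N p) + pd a f (xs N p))"
  have m33: "m 3 3 (sh N \<epsilon> q) > 0" for q using m_diag[of 3 "sh N \<epsilon> q"] N3 sh_RN by auto
  have Xf: "X q = (\<lambda>c. if c = 1 then 1 else if c = 2 then - K q else if c = 3 then \<epsilon> else 0)" for q
    using m33[of q] eps unfolding X_def Xv_def nv_def ellv_def m3v_def W3_def K_def
    by (auto simp: fun_eq_iff field_simps)
  have KD: "((\<lambda>t. K (p(a:=t))) has_real_derivative dK a p) (at (p a))" if a: "a \<in> {1..N}" for a p
  proof -
    consider "a = 1" | "a = 2" | "a \<in> {3..N}" using a by fastforce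
    then show ?thesis
    proof cases
      case 1
      have h: "((\<lambda>t. H ((noV N p)(1:=t))) has_real_derivative pd 1 H (noV N p)) (at (p 1))"
        using smooth_D[OF H_smooth, of "[]" 1 "noV N p"] N3' noV_RN by (simp add: L1s)
      have ph: "((\<lambda>t. \<Phi> ((noV N p)(1:=t))) has_real_derivative pd 1 \<Phi> (noV N p)) (at (p 1))"
        using smooth_D[OF Phi_smooth, of "[]" 1 "noV N p"] N3' noV_RN by (simp add: L1s)
      have e: "(\<lambda>t. K (p(1:=t))) = (\<lambda>t. H ((noV N p)(1:=t)) + \<epsilon> * \<Phi> ((noV N p)(1:=t)) + f (xs N p))"
        by (simp add: K_def L1s)
      show ?thesis unfolding 1 e dK_def using DERIV_add[OF DERIV_add[OF h DERIV_cmult[OF ph, of \<epsilon>]] DERIV_const] by simp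
    next
      case 2
      have e: "(\<lambda>t. K (p(2:=t))) = (\<lambda>t. K p)" by (simp add: K_def noV_2 xs_2)
      show ?thesis unfolding 2 e dK_def by simp
    next
      case 3
      have a1: "a \<noteq> 1" "a \<noteq> 2" "a \<in> {1} \<union> {3..N}" using 3 by auto
      have h: "((\<lambda>t. H ((noV N p)(a:=t))) has_real_derivative pd a H (noV N p)) (at (p a))"
        using smooth_D[OF H_smooth, of "[]" a "noV N p"] a1 noV_RN 3 by (simp add: noV_at)
      have ph: "((\<lambda>t. \<Phi> ((noV N p)(a:=t))) has_real_derivative pd a \<Phi> (noV N p)) (at (p a))"
        using smooth_D[OF Phi_smooth, of "[]" a "noV N p"] a1 noV_RN 3 by (simp add: noV_at)
      have ff: "((\<lambda>t. f ((xs N p)(a:=t))) has_real_derivative pd a f (xs N p)) (at (p a))"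
        using smooth_D[OF f_smooth, of "[]" a "xs N p"] xs_RN 3 by (simp add: xs_at)
      have e: "(\<lambda>t. K (p(a:=t))) = (\<lambda>t. H ((noV N p)(a:=t)) + \<epsilon> * \<Phi> ((noV N p)(a:=t)) + f ((xs N p)(a:=t)))"
        using 3 by (simp add: K_def noV_j xs_j)
      show ?thesis unfolding e dK_def using a1 DERIV_add[OF DERIV_add[OF h DERIV_cmult[OF ph, of \<epsilon>]] ff] by simp
    qed
  qed
  have pdX: "pd a (\<lambda>q. X q c) p = (if c = 2 then - dK a p else 0)" if "a \<in> {1..N}" for a c p
  proof (cases "c = 2")
    case True
    show ?thesis unfolding True Xf by (simp, rule pd_eqI, rule DERIV_minus, rule KD[OF that])
  next
    case False
    have "pd a (\<lambda>q. X q c) p = 0" by (rule pd_const[where c = "X p c"]) (simp add: Xf False)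
    then show ?thesis using False by simp
  qed
  have pd2g: "pd 2 (g a b) p = 0" for a b p
    by (rule pd_const[where c="g a b p"])
       (simp add: g_def gmet_def What_def W3_def Wn_def noV_2 xs_2 sh_2 cong: if_cong)
  have KillSum: "(\<Sum>c\<in>{1..N}. X p c * pd c (g a b) p + g c b p * pd a (\<lambda>q. X q c) p + g a c p * pd b (\<lambda>q. X q c) p)
      = pd 1 (g a b) p + \<epsilon> * pd 3 (g a b) p - g 2 b p * dK a p - g a 2 p * dK b p"
    if ab: "a \<in> {1..N}" "b \<in> {1..N}" for a b p
  proof -
    have "(\<Sum>c\<in>{1..N}. X p c * pd c (g a b) p + g c b p * pd a (\<lambda>q. X q c) p + g a c p * pd b (\<lambda>q. X q c) p)
      = (\<Sum>c\<in>{1..N}. (if c = 1 then pd 1 (g a b) p else 0) + (if c = 3 then \<epsilon> * pd 3 (g a b) p else 0)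
          + (if c = 2 then - (g 2 b p * dK a p) - g a 2 p * dK b p else 0))"
      apply (rule sum.cong, simp)
      apply (simp only: pdX[OF ab(1)] pdX[OF ab(2)])
      by (auto simp: Xf pd2g)
    also have "\<dots> = pd 1 (g a b) p + \<epsilon> * pd 3 (g a b) p - g 2 b p * dK a p - g a 2 p * dK b p"
      using N3' by (simp add: sum.distrib)
    finally show ?thesis .
  qed
  have gv2b: "g 2 b q = (if b = 1 then 1 else 0)" if "b \<in> {1..N}" for b q using that by (auto simp: g_def gmet_def)
  have gva2: "g a 2 q = (if a = 1 then 1 else 0)" if "a \<in> {1..N}" for a q using that by (auto simp: g_def gmet_def)
  have WL: "pd 1 (What N \<epsilon> H F2 f \<Phi> E u0 e) p + \<epsilon> * pd 3 (What N \<epsilon> H F2 f \<Phi> E u0 e) p = dK e p"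
    if "e \<in> {3..N}" for e p
  proof -
    have "pd 1 (What N \<epsilon> H F2 f \<Phi> E u0 e) p + \<epsilon> * pd 3 (What N \<epsilon> H F2 f \<Phi> E u0 e) p
     = pd e H (noV N p) + \<epsilon> * pd e \<Phi> (noV N p) + pd e f (xs N p)"
      by (rule What_lines[OF N3 eps H_smooth F2_smooth E_smooth f_smooth Phi_smooth Phi_du that])
    then show ?thesis using that by (simp add: dK_def)
  qed
  have R: "pd 1 (g a b) p + \<epsilon> * pd 3 (g a b) p = g 2 b p * dK a p + g a 2 p * dK b p"
    if ab: "a \<in> {1..N}" "b \<in> {1..N}" for a b p
  proof -
    consider "a = 2 \<or> b = 2" | "a \<in> {3..N} \<and> b \<in> {3..N}" | "a = 1 \<and> b = 1" | "a = 1 \<and> b \<in> {3..N}" | "a \<in> {3..N} \<and> b = 1"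
      using ab by fastforce
    then show ?thesis
    proof cases
      case 1
      have "pd 1 (g a b) p = 0" "pd 3 (g a b) p = 0"
        using 1 by (auto intro!: pd_const[where c="g a b p"] simp: g_def gmet_def)
      then show ?thesis using 1 ab by (auto simp: gv2b gva2 dK_def)
    next
      case 2
      define S where "S = (\<lambda>y. \<Sum>i\<in>{3..N}. m i a y * m i b y)"
      have ge: "g a b q = S (sh N \<epsilon> q)" for q using 2 by (auto simp: g_def gmet_def S_def)
      have dmi: "((\<lambda>y. m i c ((sh N \<epsilon> p)(3:=y))) has_real_derivative pd 3 (m i c) (sh N \<epsilon> p)) (at (sh N \<epsilon> p 3))"
        if "i \<in> {3..N}" "c \<in> {3..N}" for i c
        using smooth_D[OF m_smooth[OF that], of "[]" 3 "sh N \<epsilon> p"] N3' sh_RN N3 by simp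
      have "\<exists>D. ((\<lambda>y. S ((sh N \<epsilon> p)(3:=y))) has_real_derivative D) (at (sh N \<epsilon> p 3))"
        unfolding S_def
      proof (rule exI, rule DERIV_sum)
        fix i assume i: "i \<in> {3..N}"
        show "((\<lambda>y. m i a ((sh N \<epsilon> p)(3:=y)) * m i b ((sh N \<epsilon> p)(3:=y))) has_real_derivative
          pd 3 (m i a) (sh N \<epsilon> p) * m i b ((sh N \<epsilon> p)(3:= sh N \<epsilon> p 3)) + pd 3 (m i b) (sh N \<epsilon> p) * m i a ((sh N \<epsilon> p)(3:= sh N \<epsilon> p 3))) (at (sh N \<epsilon> p 3))"
          by (rule DERIV_mult) (use dmi i 2 in auto)
      qed
      then obtain D where dS: "((\<lambda>y. S ((sh N \<epsilon> p)(3:=y))) has_real_derivative D) (at (sh N \<epsilon> p 3))" by blast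
      have gfun: "g a b = (\<lambda>q. S (sh N \<epsilon> q))" using ge by (simp add: fun_eq_iff)
      from pd_sh[OF N3 dS] have "pd 1 (g a b) p + \<epsilon> * pd 3 (g a b) p = 0"
        unfolding gfun .
      then show ?thesis using 2 by (auto simp: gv2b gva2)
    next
      case 3
      have hd1: "pd 1 (g a b) p = 2 * pd 1 H (noV N p)"
        apply (rule pd_eqI) using 3
        using DERIV_cmult[OF smooth_D[OF H_smooth, of "[]" 1 "noV N p"], of 2] N3' noV_RN
        by (simp add: g_def gmet_def L1s)
      have hd3: "pd 3 (g a b) p = 2 * pd 3 H (noV N p)"
        apply (rule pd_eqI) using 3
        using DERIV_cmult[OF smooth_D[OF H_smooth, of "[]" 3 "noV N p"], of 2] N3' noV_RN
        by (simp add: g_def gmet_def noV_j noV_at)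
      have "pd 1 \<Phi> (noV N p) = pd 3 H (noV N p)" using Phi_du noV_RN by blast
      then show ?thesis using 3 N3' hd1 hd3 by (simp add: gv2b gva2 dK_def algebra_simps)
    next
      case 4
      have "pd j (g a b) p = pd j (What N \<epsilon> H F2 f \<Phi> E u0 b) p" for j
        using 4 by (intro pd_cong) (auto simp: g_def gmet_def)
      then show ?thesis using 4 WL[of b p] N3' by (auto simp: gv2b gva2)
    next
      case 5
      have "pd j (g a b) p = pd j (What N \<epsilon> H F2 f \<Phi> E u0 a) p" for j
        using 5 by (intro pd_cong) (auto simp: g_def gmet_def)
      then show ?thesis using 5 WL[of a p] N3' by (auto simp: gv2b gva2)
    qed
  qed
  have kill: "killing N g X"
    unfolding killing_def
  proof (intro ballI)
    fix p a b assume ab: "a \<in> {1..N}" "b \<in> {1..N}"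
    show "(\<Sum>c\<in>{1..N}. X p c * pd c (g a b) p + g c b p * pd a (\<lambda>q. X q c) p + g a c p * pd b (\<lambda>q. X q c) p) = 0"
      unfolding KillSum[OF ab] R[OF ab] by simp
  qed
  have gn: "gnorm N g X p = 2 * F2 (sh N \<epsilon> p) + \<epsilon>\<^sup>2 * (m 3 3 (sh N \<epsilon> p))\<^sup>2" for p
  proof -
    have X0: "X p a = 0" if "a \<notin> {1,2,3}" for a using that by (simp add: Xf)
    have inner: "(\<Sum>b\<in>{1..N}. g a b p * X p a * X p b) = (\<Sum>b\<in>{1,2,3}. g a b p * X p a * X p b)" for a
      by (rule sum.mono_neutral_right) (use N3 X0 in auto)
    have "gnorm N g X p = (\<Sum>a\<in>{1,2,3}. \<Sum>b\<in>{1,2,3}. g a b p * X p a * X p b)"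
      unfolding gnorm_def inner by (rule sum.mono_neutral_right) (use N3 X0 in auto)
    moreover have g33: "g 3 3 p = (m 3 3 (sh N \<epsilon> p))\<^sup>2"
    proof -
      have "g 3 3 p = (\<Sum>i\<in>{3..N}. m i 3 (sh N \<epsilon> p) * m i 3 (sh N \<epsilon> p))"
        using N3 by (simp add: g_def gmet_def)
      also have "\<dots> = (\<Sum>i\<in>{3}. m i 3 (sh N \<epsilon> p) * m i 3 (sh N \<epsilon> p))"
        by (rule sum.mono_neutral_right) (use N3 m_tri in auto)
      finally show ?thesis by (simp add: power2_eq_square)
    qed
    moreover have "g 1 1 p = 2 * H (noV N p)" "g 1 2 p = 1" "g 2 1 p = 1" "g 2 2 p = 0"
      "g 1 3 p = W3 N \<epsilon> F2 f \<Phi> p" "g 3 1 p = W3 N \<epsilon> F2 f \<Phi> p" "g 2 3 p = 0" "g 3 2 p = 0"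
      using N3 by (simp_all add: g_def gmet_def What_def)
    ultimately show ?thesis using eps
      by (simp add: Xf K_def W3_def field_simps power2_eq_square)
  qed
  have "\<forall>p\<in>RN {1..N}. gnorm N g X p \<le> 0" if hyp: "\<forall>y\<in>RN {3..N}. F2 y \<le> - (1/2) * \<epsilon>\<^sup>2 * (m 3 3 y)\<^sup>2"
  proof
    fix p
    have "F2 (sh N \<epsilon> p) \<le> - (1/2) * \<epsilon>\<^sup>2 * (m 3 3 (sh N \<epsilon> p))\<^sup>2" using hyp sh_RN[OF N3] by blast
    then show "gnorm N g X p \<le> 0" unfolding gn by simp
  qed
  then show ?thesis using kill gn unfolding g_def X_def by blast
qed


end
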